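(* In the setting where $W$ is a standard Brownian motion, $\kappa:[0,1]\to[0,1]$ with $\kappa(0)=0$, $\kappa(1)=1$ is H\"older continuous with some exponent $\tau>1/2$, $B(t)=W(t)-\kappa(t)W(1)$, $X(t)=\sum_{n=0}^\infty\alpha^nB(\{b^nt\})$ with $\alpha\in(0,1)$, $b\in\{2,3,\dots\}$ and $\alpha^2b<1$: there exist $\lambda>0$ and $M\in\mathbb N$ such that for all $n\ge M$ and all integers $b^{n-1}\le j<b^n$, $$\mathbb E\Big[\big(X((j+1)b^{-n})-X(jb^{-n})\big)\big(X((j+1)b^{-n}-b^{-1})-X(jb^{-n}-b^{-1})\big)\Big]\ge\lambda b^{-n}.$$
   Context: $\{x\}$ denotes the fractional part of $x\ge0$. *)

theory Defs
  imports "HOL-Probability.Probability"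
begin

definition std_brownian_motion :: "'a measure \<Rightarrow> (real \<Rightarrow> 'a \<Rightarrow> real) \<Rightarrow> bool" where
  "std_brownian_motion M W \<longleftrightarrow>
     prob_space M \<and>
     (\<forall>t\<ge>0. W t \<in> borel_measurable M) \<and>
     (\<forall>\<omega>\<in>space M. W 0 \<omega> = 0) \<and>
     (\<forall>\<omega>\<in>space M. continuous_on {0..} (\<lambda>t. W t \<omega>)) \<and>
     (\<forall>s t. 0 \<le> s \<and> s < t \<longrightarrow>
        distributed M lborel (\<lambda>\<omega>. W t \<omega> - W s \<omega>) (\<lambda>x. ennreal (normal_density 0 (sqrt (t - s)) x))) \<and>
     (\<forall>(n::nat) (ts::nat \<Rightarrow> real). 0 \<le> ts 0 \<and> (\<forall>i<n. ts i < ts (Suc i)) \<longrightarrow>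
        prob_space.indep_vars M (\<lambda>_. borel) (\<lambda>i \<omega>. W (ts (Suc i)) \<omega> - W (ts i) \<omega>) {..<n})"

definition holder_on01 :: "real \<Rightarrow> (real \<Rightarrow> real) \<Rightarrow> bool" where
  "holder_on01 tau f \<longleftrightarrow> (\<exists>C. \<forall>x\<in>{0..1}. \<forall>y\<in>{0..1}. \<bar>f x - f y\<bar> \<le> C * \<bar>x - y\<bar> powr tau)"

definition bridgeB :: "(real \<Rightarrow> real) \<Rightarrow> (real \<Rightarrow> 'a \<Rightarrow> real) \<Rightarrow> real \<Rightarrow> 'a \<Rightarrow> real" where
  "bridgeB \<kappa> W t \<omega> = W t \<omega> - \<kappa> t * W 1 \<omega>"

definition procX :: "real \<Rightarrow> nat \<Rightarrow> (real \<Rightarrow> real) \<Rightarrow> (real \<Rightarrow> 'a \<Rightarrow> real) \<Rightarrow> real \<Rightarrow> 'a \<Rightarrow> real" where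
  "procX \<alpha> b \<kappa> W t \<omega> = (\<Sum>n. \<alpha> ^ n * bridgeB \<kappa> W (frac (real b ^ n * t)) \<omega>)"

end

theory Submission
  imports Defs
begin


lemma gauss_facts:
  assumes P: "prob_space M" and s: "0 < \<sigma>"
    and D: "distributed M lborel X (\<lambda>x. ennreal (normal_density 0 \<sigma> x))"
  shows "integrable M X" "integrable M (\<lambda>\<omega>. (X \<omega>)^2)"
    "(\<integral>\<omega>. X \<omega> \<partial>M) = 0" "(\<integral>\<omega>. (X \<omega>)^2 \<partial>M) = \<sigma>^2"
proof -
  interpret prob_space M by (rule P)
  show "integrable M X"
    using distributed_integrable[OF D, of "\<lambda>x. x"] integrable_normal_moment_nz_1[OF s, of 0] by simp
  show "integrable M (\<lambda>\<omega>. (X \<omega>)^2)"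
  proof -
    have "integrable lborel (\<lambda>x. normal_density 0 \<sigma> x * x^2)"
      using integrable_normal_moment[OF s, of 0 2] by simp
    thus ?thesis using distributed_integrable[OF D, of "\<lambda>x. x^2"] by simp
  qed
  show E: "(\<integral>\<omega>. X \<omega> \<partial>M) = 0"
    using normal_distributed_expectation[OF s D] by simp
  show "(\<integral>\<omega>. (X \<omega>)^2 \<partial>M) = \<sigma>^2"
    using normal_distributed_variance[OF s D] E by simp
qed

context
  fixes M :: "'a measure" and W :: "real \<Rightarrow> 'a \<Rightarrow> real"
  assumes BM: "std_brownian_motion M W"
begin

lemma P: "prob_space M" using BM unfolding std_brownian_motion_def by blast
lemma W0: "\<omega> \<in> space M \<Longrightarrow> W 0 \<omega> = 0" using BM unfolding std_brownian_motion_def by blast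
lemma Wmeas: "0 \<le> t \<Longrightarrow> W t \<in> borel_measurable M" using BM unfolding std_brownian_motion_def by blast
lemma Wdist: "0 \<le> s \<Longrightarrow> s < t \<Longrightarrow>
  distributed M lborel (\<lambda>\<omega>. W t \<omega> - W s \<omega>) (\<lambda>x. ennreal (normal_density 0 (sqrt (t - s)) x))"
  using BM unfolding std_brownian_motion_def by blast
lemma Windep: "0 \<le> ts 0 \<Longrightarrow> (\<forall>i<n. ts i < ts (Suc i)) \<Longrightarrow>
  prob_space.indep_vars M (\<lambda>_. borel) (\<lambda>i \<omega>. W (ts (Suc i)) \<omega> - W (ts i) \<omega>) {..<n}"
  using BM unfolding std_brownian_motion_def by blast

lemma Wsq:
  assumes t: "0 \<le> t"
  shows "integrable M (\<lambda>\<omega>. W t \<omega> * W t \<omega>) \<and> (\<integral>\<omega>. W t \<omega> * W t \<omega> \<partial>M) = t"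
proof (cases "t = 0")
  case True
  have "integrable M (\<lambda>\<omega>. 0::real)" by simp
  moreover have "(\<integral>\<omega>. W t \<omega> * W t \<omega> \<partial>M) = (\<integral>\<omega>. 0 \<partial>M)"
    by (rule Bochner_Integration.integral_cong[OF refl]) (auto simp: True W0)
  ultimately show ?thesis using True
    by (auto intro: Bochner_Integration.integrable_cong[OF refl, THEN iffD1, rotated] simp: W0)
next
  case False
  with t have tp: "0 < t" by simp
  note G = gauss_facts[OF P _ Wdist[OF order_refl tp]]
  have sp: "0 < sqrt (t - 0)" using tp by simp
  have eq: "\<And>\<omega>. \<omega> \<in> space M \<Longrightarrow> (W t \<omega> - W 0 \<omega>)^2 = W t \<omega> * W t \<omega>"
    by (simp add: W0 power2_eq_square)
  have "integrable M (\<lambda>\<omega>. W t \<omega> * W t \<omega>)"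
    using G(2)[OF sp] by (rule Bochner_Integration.integrable_cong[OF refl, THEN iffD1, rotated]) (auto simp: eq)
  moreover have "(\<integral>\<omega>. W t \<omega> * W t \<omega> \<partial>M) = (\<integral>\<omega>. (W t \<omega> - W 0 \<omega>)^2 \<partial>M)"
    by (rule Bochner_Integration.integral_cong[OF refl]) (auto simp: eq)
  ultimately show ?thesis using G(4)[OF sp] tp by simp
qed

lemma Wcov_lt:
  assumes s: "0 < s" and st: "s < t"
  shows "integrable M (\<lambda>\<omega>. W s \<omega> * W t \<omega>) \<and> (\<integral>\<omega>. W s \<omega> * W t \<omega> \<partial>M) = s"
proof -
  interpret prob_space M by (rule P)
  define ts :: "nat \<Rightarrow> real" where "ts = (\<lambda>i. if i = 0 then 0 else if i = 1 then s else t)"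
  have I: "indep_vars (\<lambda>_. borel) (\<lambda>i \<omega>. W (ts (Suc i)) \<omega> - W (ts i) \<omega>) (insert 0 {1::nat})"
  proof -
    have "indep_vars (\<lambda>_. borel) (\<lambda>i \<omega>. W (ts (Suc i)) \<omega> - W (ts i) \<omega>) {..<2}"
      using Windep[of ts 2] s st by (auto simp: ts_def less_Suc_eq numeral_2_eq_2)
    moreover have "{..<2::nat} = insert 0 {1}" by auto
    ultimately show ?thesis by simp
  qed
  have "indep_var borel (\<lambda>\<omega>. W (ts (Suc 0)) \<omega> - W (ts 0) \<omega>) borel
         (\<lambda>\<omega>. \<Sum>i\<in>{1}. W (ts (Suc i)) \<omega> - W (ts i) \<omega>)"
    using indep_vars_sum[OF _ _ I] by simp
  hence ind: "indep_var borel (\<lambda>\<omega>. W s \<omega> - W 0 \<omega>) borel (\<lambda>\<omega>. W t \<omega> - W s \<omega>)"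
    by (simp add: ts_def)
  have sp: "0 < sqrt (s - 0)" using s by simp
  have tp: "0 < sqrt (t - s)" using st by simp
  note A = gauss_facts[OF P sp Wdist[OF order_refl s]]
  note B = gauss_facts[OF P tp Wdist[OF _ st]]
  have iAB: "integrable M (\<lambda>\<omega>. (W s \<omega> - W 0 \<omega>) * (W t \<omega> - W s \<omega>))"
    by (rule indep_var_integrable[OF ind A(1) B(1)]) (use s in simp)
  have eAB: "(\<integral>\<omega>. (W s \<omega> - W 0 \<omega>) * (W t \<omega> - W s \<omega>) \<partial>M) = 0"
    using indep_var_lebesgue_integral[OF ind A(1) B(1)] B(3) s by simp
  have eq: "\<And>\<omega>. \<omega> \<in> space M \<Longrightarrow> W s \<omega> * W t \<omega> = (W s \<omega> - W 0 \<omega>)^2 + (W s \<omega> - W 0 \<omega>) * (W t \<omega> - W s \<omega>)"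
    by (simp add: W0 power2_eq_square algebra_simps)
  have i2: "integrable M (\<lambda>\<omega>. (W s \<omega> - W 0 \<omega>)^2 + (W s \<omega> - W 0 \<omega>) * (W t \<omega> - W s \<omega>))"
    using A(2) iAB by simp
  have "integrable M (\<lambda>\<omega>. W s \<omega> * W t \<omega>)"
    using i2 by (rule Bochner_Integration.integrable_cong[OF refl, THEN iffD1, rotated]) (auto simp: eq)
  moreover have "(\<integral>\<omega>. W s \<omega> * W t \<omega> \<partial>M) = (\<integral>\<omega>. (W s \<omega> - W 0 \<omega>)^2 + (W s \<omega> - W 0 \<omega>) * (W t \<omega> - W s \<omega>) \<partial>M)"
    by (rule Bochner_Integration.integral_cong[OF refl]) (auto simp: eq)
  moreover have "\<dots> = s"
    using A(2,4) iAB eAB s by simp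
  ultimately show ?thesis by simp
qed

lemma Wcov:
  assumes s: "0 \<le> s" and t: "0 \<le> t"
  shows "integrable M (\<lambda>\<omega>. W s \<omega> * W t \<omega>) \<and> (\<integral>\<omega>. W s \<omega> * W t \<omega> \<partial>M) = min s t"
proof -
  have zero: ?thesis if "s = 0 \<or> t = 0"
  proof -
    have "integrable M (\<lambda>\<omega>. 0::real)" by simp
    moreover have "(\<integral>\<omega>. W s \<omega> * W t \<omega> \<partial>M) = (\<integral>\<omega>. 0 \<partial>M)"
      by (rule Bochner_Integration.integral_cong[OF refl]) (use that in \<open>auto simp: W0\<close>)
    ultimately show ?thesis using that s t
      by (auto intro: Bochner_Integration.integrable_cong[OF refl, THEN iffD1, rotated] simp: W0)
  qed
  show ?thesis
  proof (cases "s = 0 \<or> t = 0")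
    case True then show ?thesis by (rule zero)
  next
    case False
    hence sp: "0 < s" and tp: "0 < t" using s t by auto
    consider "s < t" | "s = t" | "t < s" by linarith
    then show ?thesis
    proof cases
      case 1 then show ?thesis using Wcov_lt[OF sp] by simp
    next
      case 2 then show ?thesis using Wsq[OF s] by simp
    next
      case 3 then show ?thesis using Wcov_lt[OF tp 3] by (simp add: mult.commute)
    qed
  qed
qed

lemma lin_cov:
  assumes I: "finite I" and J: "finite J" and s: "\<And>i. i \<in> I \<Longrightarrow> 0 \<le> s i"
    and t: "\<And>j. j \<in> J \<Longrightarrow> 0 \<le> t j"
  shows "integrable M (\<lambda>\<omega>. (\<Sum>i\<in>I. a i * W (s i) \<omega>) * (\<Sum>j\<in>J. c j * W (t j) \<omega>)) \<and>
    (\<integral>\<omega>. (\<Sum>i\<in>I. a i * W (s i) \<omega>) * (\<Sum>j\<in>J. c j * W (t j) \<omega>) \<partial>M) =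
    (\<Sum>i\<in>I. \<Sum>j\<in>J. a i * c j * min (s i) (t j))"
proof -
  have eq: "(\<lambda>\<omega>. (\<Sum>i\<in>I. a i * W (s i) \<omega>) * (\<Sum>j\<in>J. c j * W (t j) \<omega>)) =
     (\<lambda>\<omega>. \<Sum>i\<in>I. \<Sum>j\<in>J. a i * c j * (W (s i) \<omega> * W (t j) \<omega>))"
    by (simp add: sum_product mult_ac)
  have w1: "integrable M (\<lambda>\<omega>. W (s i) \<omega> * W (t j) \<omega>)" if "i \<in> I" "j \<in> J" for i j
    using Wcov[OF s[OF that(1)] t[OF that(2)]] by simp
  have w2: "(\<integral>\<omega>. W (s i) \<omega> * W (t j) \<omega> \<partial>M) = min (s i) (t j)" if "i \<in> I" "j \<in> J" for i j
    using Wcov[OF s[OF that(1)] t[OF that(2)]] by simp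
  have "integrable M (\<lambda>\<omega>. \<Sum>i\<in>I. \<Sum>j\<in>J. a i * c j * (W (s i) \<omega> * W (t j) \<omega>))"
    by (auto intro!: Bochner_Integration.integrable_sum integrable_mult_right w1)
  moreover have "(\<integral>\<omega>. (\<Sum>i\<in>I. \<Sum>j\<in>J. a i * c j * (W (s i) \<omega> * W (t j) \<omega>)) \<partial>M)
     = (\<Sum>i\<in>I. \<Sum>j\<in>J. a i * c j * (\<integral>\<omega>. W (s i) \<omega> * W (t j) \<omega> \<partial>M))"
    by (simp add: integral_sum integrable_sum w1)
  moreover have "\<dots> = (\<Sum>i\<in>I. \<Sum>j\<in>J. a i * c j * min (s i) (t j))"
    by (intro sum.cong refl) (simp add: w2)
  ultimately show ?thesis unfolding eq by simp
qed

lemma bridge_cov: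
  fixes \<kappa> :: "real \<Rightarrow> real"
  assumes p: "0 \<le> p" "p \<le> 1" and q: "0 \<le> q" "q \<le> 1" and p': "0 \<le> p'" "p' \<le> 1" and q': "0 \<le> q'" "q' \<le> 1"
  shows "integrable M (\<lambda>\<omega>. (bridgeB \<kappa> W p \<omega> - bridgeB \<kappa> W q \<omega>) * (bridgeB \<kappa> W p' \<omega> - bridgeB \<kappa> W q' \<omega>)) \<and>
    (\<integral>\<omega>. (bridgeB \<kappa> W p \<omega> - bridgeB \<kappa> W q \<omega>) * (bridgeB \<kappa> W p' \<omega> - bridgeB \<kappa> W q' \<omega>) \<partial>M) =
    (min p p' - min p q' - min q p' + min q q') - (\<kappa> p' - \<kappa> q') * (p - q) - (\<kappa> p - \<kappa> q) * (p' - q')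
     + (\<kappa> p - \<kappa> q) * (\<kappa> p' - \<kappa> q')"
proof -
  define a :: "nat \<Rightarrow> real" where "a i = (if i = 0 then 1 else if i = 1 then -1 else - (\<kappa> p - \<kappa> q))" for i
  define s :: "nat \<Rightarrow> real" where "s i = (if i = 0 then p else if i = 1 then q else 1)" for i
  define c :: "nat \<Rightarrow> real" where "c i = (if i = 0 then 1 else if i = 1 then -1 else - (\<kappa> p' - \<kappa> q'))" for i
  define t :: "nat \<Rightarrow> real" where "t i = (if i = 0 then p' else if i = 1 then q' else 1)" for i
  have e1: "bridgeB \<kappa> W p \<omega> - bridgeB \<kappa> W q \<omega> = (\<Sum>i\<in>{0,1,2}. a i * W (s i) \<omega>)" for \<omega>
    by (simp add: a_def s_def bridgeB_def algebra_simps)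
  have e2: "bridgeB \<kappa> W p' \<omega> - bridgeB \<kappa> W q' \<omega> = (\<Sum>i\<in>{0,1,2}. c i * W (t i) \<omega>)" for \<omega>
    by (simp add: c_def t_def bridgeB_def algebra_simps)
  have L: "integrable M (\<lambda>\<omega>. (\<Sum>i\<in>{0,1,2}. a i * W (s i) \<omega>) * (\<Sum>j\<in>{0,1,2}. c j * W (t j) \<omega>)) \<and>
    (\<integral>\<omega>. (\<Sum>i\<in>{0,1,2}. a i * W (s i) \<omega>) * (\<Sum>j\<in>{0,1,2}. c j * W (t j) \<omega>) \<partial>M) =
    (\<Sum>i\<in>{0,1,2::nat}. \<Sum>j\<in>{0,1,2::nat}. a i * c j * min (s i) (t j))"
    by (rule lin_cov) (use p q p' q' in \<open>auto simp: s_def t_def\<close>)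
  have V: "(\<Sum>i\<in>{0,1,2::nat}. \<Sum>j\<in>{0,1,2::nat}. a i * c j * min (s i) (t j)) =
    (min p p' - min p q' - min q p' + min q q') - (\<kappa> p' - \<kappa> q') * (p - q) - (\<kappa> p - \<kappa> q) * (p' - q')
     + (\<kappa> p - \<kappa> q) * (\<kappa> p' - \<kappa> q')"
    using p q p' q' by (simp add: a_def s_def c_def t_def min_def algebra_simps)
  show ?thesis using L V unfolding e1 e2 by simp
qed

end


lemma frac_nat_div:
  assumes "0 < N"
  shows "frac (real m / real N) = real (m mod N) / real N"
proof -
  have "m = N * (m div N) + m mod N" by simp
  hence "real m = real N * real (m div N) + real (m mod N)"
    by (metis of_nat_add of_nat_mult)
  hence "real m / real N = real (m div N) + real (m mod N) / real N"
    using assms by (simp add: field_simps)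
  moreover have "0 \<le> real (m mod N) / real N" "real (m mod N) / real N < 1"
    using assms by (auto simp: field_simps)
  ultimately show ?thesis
    unfolding frac_unique_iff by simp
qed

definition qq :: "nat \<Rightarrow> nat \<Rightarrow> nat \<Rightarrow> nat \<Rightarrow> real" where
  "qq b n k m = real (m mod b ^ (n - k)) / real (b ^ (n - k))"

lemma qq_bounds:
  assumes "b \<ge> 1"
  shows "0 \<le> qq b n k m" "qq b n k m + 1 / real (b ^ (n - k)) \<le> 1"
proof -
  have pos: "0 < b ^ (n - k)" using assms by simp
  show "0 \<le> qq b n k m" by (simp add: qq_def)
  have "m mod b ^ (n - k) + 1 \<le> b ^ (n - k)" using pos
    by (metis Suc_eq_plus1 Suc_leI mod_less_divisor)
  hence "real (m mod b ^ (n - k)) + 1 \<le> real (b ^ (n - k))" by linarith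
  thus "qq b n k m + 1 / real (b ^ (n - k)) \<le> 1"
    using pos unfolding qq_def add_divide_distrib[symmetric]
    by (subst divide_le_eq_1) auto
qed

lemma procX_grid:
  assumes b: "b \<ge> 1" and B0: "bridgeB \<kappa> W 0 \<omega> = 0"
  shows "procX \<alpha> b \<kappa> W (real m / real b ^ n) \<omega> =
    (\<Sum>k<n. \<alpha> ^ k * bridgeB \<kappa> W (real (m mod b ^ (n - k)) / real (b ^ (n - k))) \<omega>)"
proof -
  have z: "\<alpha> ^ k * bridgeB \<kappa> W (frac (real b ^ k * (real m / real b ^ n))) \<omega> = 0" if "k \<notin> {..<n}" for k
  proof -
    from that obtain d where d: "k = n + d" by (metis add_diff_inverse_nat lessThan_iff)
    hence "real b ^ k * (real m / real b ^ n) = real (m * b ^ d)"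
      using b by (simp add: power_add field_simps)
    hence "frac (real b ^ k * (real m / real b ^ n)) = 0"
      by (metis frac_eq_0_iff Ints_of_nat)
    thus ?thesis using B0 by (metis mult_zero_right)
  qed
  have "procX \<alpha> b \<kappa> W (real m / real b ^ n) \<omega> =
     (\<Sum>k<n. \<alpha> ^ k * bridgeB \<kappa> W (frac (real b ^ k * (real m / real b ^ n))) \<omega>)"
    unfolding procX_def by (rule suminf_finite) (use z in auto)
  also have "\<dots> = (\<Sum>k<n. \<alpha> ^ k * bridgeB \<kappa> W (real (m mod b ^ (n - k)) / real (b ^ (n - k))) \<omega>)"
  proof (intro sum.cong refl)
    fix k assume "k \<in> {..<n}"
    then obtain d where d: "n = k + d" by (metis add_diff_inverse_nat lessThan_iff not_less_eq less_imp_le_nat le_add_diff_inverse)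
    hence eq1: "real b ^ k * (real m / real b ^ n) = real m / real (b ^ (n - k))"
      using b by (simp add: power_add field_simps)
    have eq2: "frac (real m / real (b ^ (n - k))) = real (m mod b ^ (n - k)) / real (b ^ (n - k))"
      by (rule frac_nat_div) (use b in simp)
    show "\<alpha> ^ k * bridgeB \<kappa> W (frac (real b ^ k * (real m / real b ^ n))) \<omega> =
       \<alpha> ^ k * bridgeB \<kappa> W (real (m mod b ^ (n - k)) / real (b ^ (n - k))) \<omega>"
      by (simp only: eq1 eq2)
  qed
  finally show ?thesis .
qed

lemma procX_incr:
  assumes b: "b \<ge> 1" and B0: "bridgeB \<kappa> W 0 \<omega> = 0" and B1: "bridgeB \<kappa> W 1 \<omega> = 0"
  shows "procX \<alpha> b \<kappa> W ((real m + 1) / real b ^ n) \<omega> - procX \<alpha> b \<kappa> W (real m / real b ^ n) \<omega> =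
    (\<Sum>k<n. \<alpha> ^ k * (bridgeB \<kappa> W (qq b n k m + 1 / real (b ^ (n - k))) \<omega> - bridgeB \<kappa> W (qq b n k m) \<omega>))"
proof -
  have "real m + 1 = real (Suc m)" by simp
  hence "procX \<alpha> b \<kappa> W ((real m + 1) / real b ^ n) \<omega> - procX \<alpha> b \<kappa> W (real m / real b ^ n) \<omega> =
    (\<Sum>k<n. \<alpha> ^ k * bridgeB \<kappa> W (real (Suc m mod b ^ (n - k)) / real (b ^ (n - k))) \<omega>) -
    (\<Sum>k<n. \<alpha> ^ k * bridgeB \<kappa> W (real (m mod b ^ (n - k)) / real (b ^ (n - k))) \<omega>)"
    by (simp only: procX_grid[OF b B0])
  also have "\<dots> = (\<Sum>k<n. \<alpha> ^ k * (bridgeB \<kappa> W (qq b n k m + 1 / real (b ^ (n - k))) \<omega> - bridgeB \<kappa> W (qq b n k m) \<omega>))"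
    unfolding sum_subtractf[symmetric] right_diff_distrib
  proof (intro sum.cong refl)
    fix k
    define N where "N = b ^ (n - k)"
    have Np: "0 < N" using b by (simp add: N_def)
    have "bridgeB \<kappa> W (real (Suc m mod N) / real N) \<omega> = bridgeB \<kappa> W (real (m mod N) / real N + 1 / real N) \<omega>"
    proof (cases "Suc (m mod N) = N")
      case True
      hence "real (Suc (m mod N)) = real N" by (simp only:)
      hence "real (m mod N) + 1 = real N" by simp
      hence "real (m mod N) / real N + 1 / real N = 1" using Np
        by (simp add: add_divide_distrib[symmetric])
      moreover have "Suc m mod N = 0" using True by (simp add: mod_Suc)
      ultimately show ?thesis using B0 B1 by simp
    next
      case False
      hence "Suc m mod N = Suc (m mod N)" by (simp add: mod_Suc)
      thus ?thesis by (simp add: add_divide_distrib add.commute)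
    qed
    thus "\<alpha> ^ k * bridgeB \<kappa> W (real (Suc m mod b ^ (n - k)) / real (b ^ (n - k))) \<omega> -
         \<alpha> ^ k * bridgeB \<kappa> W (real (m mod b ^ (n - k)) / real (b ^ (n - k))) \<omega> =
         \<alpha> ^ k * bridgeB \<kappa> W (qq b n k m + 1 / real (b ^ (n - k))) \<omega> - \<alpha> ^ k * bridgeB \<kappa> W (qq b n k m) \<omega>"
      by (simp add: qq_def N_def)
  qed
  finally show ?thesis .
qed



lemma main_bound:
  fixes ov :: "nat \<Rightarrow> nat \<Rightarrow> real" and h d d' E :: "nat \<Rightarrow> real" and \<alpha> :: real
  assumes n: "2 \<le> n" and a: "0 < \<alpha>"
    and ov: "\<And>k l. 0 \<le> ov k l" and ov11: "ov 1 1 = h 1"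
    and h: "\<And>k. 0 \<le> h k" and d: "\<And>k. \<bar>d k\<bar> \<le> E k" and d': "\<And>k. \<bar>d' k\<bar> \<le> E k"
  shows "(\<Sum>k<n. \<Sum>l<n. \<alpha>^k * \<alpha>^l * (ov k l - d' l * h k - d k * h l + d k * d' l))
     \<ge> \<alpha>^2 * h 1 - 2 * (\<Sum>k<n. \<alpha>^k * E k) * (\<Sum>k<n. \<alpha>^k * h k) - (\<Sum>k<n. \<alpha>^k * E k)^2"
proof -
  define SE where "SE = (\<Sum>k<n. \<alpha>^k * E k)"
  define SH where "SH = (\<Sum>k<n. \<alpha>^k * h k)"
  define D where "D = (\<Sum>k<n. \<alpha>^k * d k)"
  define D' where "D' = (\<Sum>k<n. \<alpha>^k * d' k)"
  have split: "(\<Sum>k<n. \<Sum>l<n. \<alpha>^k * \<alpha>^l * (ov k l - d' l * h k - d k * h l + d k * d' l))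
     = (\<Sum>k<n. \<Sum>l<n. \<alpha>^k * \<alpha>^l * ov k l) - SH * D' - D * SH + D * D'"
  proof -
    have "\<And>k l. \<alpha>^k * \<alpha>^l * (ov k l - d' l * h k - d k * h l + d k * d' l) =
       \<alpha>^k * \<alpha>^l * ov k l - (\<alpha>^k * h k) * (\<alpha>^l * d' l) - (\<alpha>^k * d k) * (\<alpha>^l * h l)
       + (\<alpha>^k * d k) * (\<alpha>^l * d' l)"
      by (simp add: algebra_simps)
    hence "(\<Sum>k<n. \<Sum>l<n. \<alpha>^k * \<alpha>^l * (ov k l - d' l * h k - d k * h l + d k * d' l))
      = (\<Sum>k<n. \<Sum>l<n. \<alpha>^k * \<alpha>^l * ov k l) - (\<Sum>k<n. \<Sum>l<n. (\<alpha>^k * h k) * (\<alpha>^l * d' l))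
        - (\<Sum>k<n. \<Sum>l<n. (\<alpha>^k * d k) * (\<alpha>^l * h l)) + (\<Sum>k<n. \<Sum>l<n. (\<alpha>^k * d k) * (\<alpha>^l * d' l))"
      by (simp add: sum.distrib sum_subtractf)
    thus ?thesis by (simp add: SH_def D_def D'_def sum_product)
  qed
  have "(\<Sum>k<n. \<Sum>l<n. \<alpha>^k * \<alpha>^l * ov k l) \<ge> (\<Sum>l<n. \<alpha>^1 * \<alpha>^l * ov 1 l)"
    by (rule member_le_sum) (use n a ov in \<open>auto intro!: sum_nonneg\<close>)
  moreover have "(\<Sum>l<n. \<alpha>^1 * \<alpha>^l * ov 1 l) \<ge> \<alpha>^1 * \<alpha>^1 * ov 1 1"
    by (rule member_le_sum) (use n a ov in auto)
  ultimately have S1: "(\<Sum>k<n. \<Sum>l<n. \<alpha>^k * \<alpha>^l * ov k l) \<ge> \<alpha>^2 * h 1"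
    using ov11 by (simp add: power2_eq_square)
  have absD: "\<bar>D\<bar> \<le> SE" unfolding D_def SE_def
    by (rule order_trans[OF sum_abs]) (use a d in \<open>auto intro!: sum_mono simp: abs_mult\<close>)
  have absD': "\<bar>D'\<bar> \<le> SE" unfolding D'_def SE_def
    by (rule order_trans[OF sum_abs]) (use a d' in \<open>auto intro!: sum_mono simp: abs_mult\<close>)
  have SH0: "0 \<le> SH" unfolding SH_def using a h by (auto intro!: sum_nonneg)
  have "\<bar>SH * D'\<bar> \<le> SE * SH" using absD' SH0 by (metis abs_mult abs_of_nonneg mult.commute mult_right_mono)
  moreover have "\<bar>D * SH\<bar> \<le> SE * SH" using absD SH0 by (simp add: abs_mult mult_right_mono)
  moreover have "\<bar>D * D'\<bar> \<le> SE^2" using absD absD'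
    by (simp add: abs_mult power2_eq_square mult_mono)
  ultimately have "SH * D' \<le> SE * SH" "D * SH \<le> SE * SH" "- (D * D') \<le> SE^2"
    by (simp_all add: abs_le_iff)
  thus ?thesis unfolding split SE_def[symmetric] SH_def[symmetric] using S1
    by linarith
qed

lemma asym:
  fixes \<gamma> K eps :: real
  assumes "0 \<le> \<gamma>" "\<gamma> < 1" "0 < eps"
  shows "\<exists>N0. \<forall>n\<ge>N0. K * (real n ^ 2 * \<gamma> ^ n) \<le> eps"
proof -
  have "norm (sqrt \<gamma>) < 1" using assms by simp
  hence "(\<lambda>n. of_nat n * sqrt \<gamma> ^ n) \<longlonglongrightarrow> 0" by (rule powser_times_n_limit_0)
  hence "(\<lambda>n. K * (of_nat n * sqrt \<gamma> ^ n)^2) \<longlonglongrightarrow> K * 0^2"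
    by (intro tendsto_intros)
  moreover have "(\<lambda>n. K * (of_nat n * sqrt \<gamma> ^ n)^2) = (\<lambda>n. K * (real n ^ 2 * \<gamma> ^ n))"
    using assms by (simp add: power_mult_distrib power_mult[symmetric] mult.commute[of _ 2] power_mult)
  ultimately have "(\<lambda>n. K * (real n ^ 2 * \<gamma> ^ n)) \<longlonglongrightarrow> 0" by simp
  hence "eventually (\<lambda>n. K * (real n ^ 2 * \<gamma> ^ n) < eps) sequentially"
    using assms by (intro order_tendstoD) auto
  thus ?thesis unfolding eventually_sequentially by (meson less_imp_le)
qed



lemma powr_aux:
  fixes x t :: real
  assumes "1 < x"
  shows "(1 / x ^ m) powr t = (1 / (x powr t)) ^ m"
proof -
  have "x ^ m = x powr real m" using assms by (simp add: powr_realpow)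
  hence "(x ^ m) powr t = (x powr t) ^ m"
    using assms by (simp add: powr_powr powr_power mult.commute)
  thus ?thesis by (simp add: powr_divide power_one_over)
qed

lemma param_facts:
  fixes \<alpha> \<tau> :: real and b :: nat
  assumes tau: "\<tau> > 1/2" and alpha: "0 < \<alpha>" "\<alpha> < 1" and b: "b \<ge> 2" and ab: "\<alpha>\<^sup>2 * real b < 1"
    and \<beta>_def: "\<beta> = real b powr \<tau>"
    and \<rho>_def: "\<rho> = max \<alpha> (max (1 / \<beta>) (1 / real b))"
  shows "1 < \<beta>" "\<alpha> \<le> \<rho>" "1 / \<beta> \<le> \<rho>" "1 / real b \<le> \<rho>" "0 < \<rho>" "\<rho>\<^sup>2 * real b < 1"
proof -
  have b1: "1 < real b" using b by simp
  show "1 < \<beta>" unfolding \<beta>_def using b1 tau by simp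
  show "\<alpha> \<le> \<rho>" "1 / \<beta> \<le> \<rho>" "1 / real b \<le> \<rho>" unfolding \<rho>_def by auto
  show "0 < \<rho>" unfolding \<rho>_def using alpha by auto
  have "\<beta>\<^sup>2 = real b powr (2 * \<tau>)"
    unfolding \<beta>_def using b1 by (simp add: powr_power[symmetric] power2_eq_square powr_add[symmetric])
  moreover have "real b powr 1 < real b powr (2 * \<tau>)"
    using b1 tau by (intro powr_less_mono) auto
  ultimately have bb: "real b < \<beta>\<^sup>2" by simp
  have bpos: "0 < \<beta>" unfolding \<beta>_def using b1 by simp
  have c1: "(1 / \<beta>)\<^sup>2 * real b < 1" using bb bpos by (simp add: power_divide field_simps)
  have c2: "(1 / real b)\<^sup>2 * real b < 1" using b1 by (simp add: power2_eq_square field_simps)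
  have "\<rho> = \<alpha> \<or> \<rho> = 1 / \<beta> \<or> \<rho> = 1 / real b" unfolding \<rho>_def by linarith
  thus "\<rho>\<^sup>2 * real b < 1" using ab c1 c2 by auto
qed

lemma ov_nonneg:
  fixes a a' c c' :: real
  assumes "a \<le> a'" "c \<le> c'"
  shows "0 \<le> min a' c' - min a' c - min a c' + min a c"
  using assms by (simp add: min_def)

lemma term_bound:
  fixes \<alpha> x \<rho> :: real
  assumes "0 \<le> \<alpha>" "\<alpha> \<le> \<rho>" "0 \<le> x" "x \<le> \<rho>" "k < n"
  shows "\<alpha> ^ k * x ^ (n - k) \<le> \<rho> ^ n"
proof -
  have "\<alpha> ^ k * x ^ (n - k) \<le> \<rho> ^ k * \<rho> ^ (n - k)"
    using assms by (intro mult_mono power_mono) auto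
  also have "\<dots> = \<rho> ^ n" using assms by (simp add: power_add[symmetric])
  finally show ?thesis .
qed

theorem lemma3p11:
  fixes M :: "'a measure" and W :: "real \<Rightarrow> 'a \<Rightarrow> real"
    and \<kappa> :: "real \<Rightarrow> real" and \<tau> \<alpha> :: real and b :: nat
  assumes BM: "std_brownian_motion M W"
    and kappa_range: "\<kappa> ` {0..1} \<subseteq> {0..1}"
    and kappa0: "\<kappa> 0 = 0" and kappa1: "\<kappa> 1 = 1"
    and tau: "\<tau> > 1/2" and hol: "holder_on01 \<tau> \<kappa>"
    and alpha: "0 < \<alpha>" "\<alpha> < 1"
    and b: "b \<ge> 2"
    and ab: "\<alpha>\<^sup>2 * real b < 1"
  shows "\<exists>lam>0. \<exists>Mn::nat. \<forall>n\<ge>Mn. \<forall>j::nat. b ^ (n - 1) \<le> j \<and> j < b ^ n \<longrightarrow>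
     (\<integral>\<omega>. (procX \<alpha> b \<kappa> W ((real j + 1) / real b ^ n) \<omega> - procX \<alpha> b \<kappa> W (real j / real b ^ n) \<omega>)
          * (procX \<alpha> b \<kappa> W ((real j + 1) / real b ^ n - 1 / real b) \<omega>
             - procX \<alpha> b \<kappa> W (real j / real b ^ n - 1 / real b) \<omega>) \<partial>M)
     \<ge> lam / real b ^ n"
proof -
  obtain C where C: "\<forall>x\<in>{0..1}. \<forall>y\<in>{0..1}. \<bar>\<kappa> x - \<kappa> y\<bar> \<le> C * \<bar>x - y\<bar> powr \<tau>"
    using hol unfolding holder_on01_def by blast
  define C' where "C' = max C 0"
  have C'0: "0 \<le> C'" by (simp add: C'_def)
  have hC: "\<bar>\<kappa> x - \<kappa> y\<bar> \<le> C' * \<bar>x - y\<bar> powr \<tau>" if "x \<in> {0..1}" "y \<in> {0..1}" for x y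
  proof -
    have "C * \<bar>x - y\<bar> powr \<tau> \<le> C' * \<bar>x - y\<bar> powr \<tau>" by (intro mult_right_mono) (auto simp: C'_def)
    thus ?thesis using C that by fastforce
  qed
  define \<beta> where "\<beta> = real b powr \<tau>"
  define \<rho> where "\<rho> = max \<alpha> (max (1 / \<beta>) (1 / real b))"
  note pf = param_facts[OF tau alpha b ab \<beta>_def \<rho>_def]
  define \<gamma> where "\<gamma> = \<rho>^2 * real b"
  define K where "K = 2 * C' + C'^2"
  define lam where "lam = \<alpha>^2 * real b / 2"
  have lam0: "0 < lam" using alpha b by (simp add: lam_def)
  have g0: "0 \<le> \<gamma>" unfolding \<gamma>_def by simp
  obtain N0 where N0: "\<forall>n\<ge>N0. K * (real n ^ 2 * \<gamma> ^ n) \<le> lam"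
    using asym[OF g0 _ lam0, of K] pf(6) unfolding \<gamma>_def by blast
  have B0: "bridgeB \<kappa> W 0 \<omega> = 0" if "\<omega> \<in> space M" for \<omega>
    using W0[OF BM that] kappa0 by (simp add: bridgeB_def)
  have B1: "bridgeB \<kappa> W 1 \<omega> = 0" for \<omega> using kappa1 by (simp add: bridgeB_def)
  have b1: "b \<ge> 1" using b by simp
  have rb1: "1 < real b" using b by simp
  show ?thesis
  proof (intro exI[of _ lam] conjI lam0 exI[of _ "max N0 2"] allI impI)
    fix n j assume n: "max N0 2 \<le> n" and j: "b ^ (n - 1) \<le> j \<and> j < b ^ n"
    have n2: "2 \<le> n" and nN0: "N0 \<le> n" using n by auto
    define j' where "j' = j - b ^ (n - 1)"
    have nS: "n = Suc (n - 1)" using n2 by simp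
    have bn: "real b ^ n = real b * real b ^ (n - 1)" by (subst nS) simp
    have rj': "real j' = real j - real b ^ (n - 1)" using j unfolding j'_def by (simp add: of_nat_diff)
    have bpos: "0 < real b" using b by simp
    have sh1: "real j / real b ^ n - 1 / real b = real j' / real b ^ n"
      using bpos unfolding rj' bn by (simp add: field_simps)
    have sh2: "(real j + 1) / real b ^ n - 1 / real b = (real j' + 1) / real b ^ n"
      using bpos unfolding rj' bn by (simp add: field_simps)
    define h where "h k = 1 / real (b ^ (n - k))" for k
    define q where "q k = qq b n k j" for k
    define q' where "q' k = qq b n k j'" for k
    define Y where "Y k \<omega> = bridgeB \<kappa> W (q k + h k) \<omega> - bridgeB \<kappa> W (q k) \<omega>" for k \<omega>
    define Y' where "Y' k \<omega> = bridgeB \<kappa> W (q' k + h k) \<omega> - bridgeB \<kappa> W (q' k) \<omega>" for k \<omega>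
    have X1: "procX \<alpha> b \<kappa> W ((real j + 1) / real b ^ n) \<omega> - procX \<alpha> b \<kappa> W (real j / real b ^ n) \<omega>
       = (\<Sum>k<n. \<alpha>^k * Y k \<omega>)" if "\<omega> \<in> space M" for \<omega>
      using procX_incr[OF b1 B0[OF that] B1, of \<alpha> j n] unfolding Y_def q_def h_def .
    have X2: "procX \<alpha> b \<kappa> W ((real j + 1) / real b ^ n - 1 / real b) \<omega>
       - procX \<alpha> b \<kappa> W (real j / real b ^ n - 1 / real b) \<omega>
       = (\<Sum>k<n. \<alpha>^k * Y' k \<omega>)" if "\<omega> \<in> space M" for \<omega>
      unfolding sh1 sh2
      using procX_incr[OF b1 B0[OF that] B1, of \<alpha> j' n] unfolding Y'_def q'_def h_def .
    have qb: "0 \<le> q k" "q k + h k \<le> 1" "0 \<le> q' k" "q' k + h k \<le> 1" for k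
      using qq_bounds[OF b1] unfolding q_def q'_def h_def by auto
    have h0: "0 \<le> h k" for k by (simp add: h_def)
    define d where "d k = \<kappa> (q k + h k) - \<kappa> (q k)" for k
    define d' where "d' k = \<kappa> (q' k + h k) - \<kappa> (q' k)" for k
    define ov where "ov k l = min (q k + h k) (q' l + h l) - min (q k + h k) (q' l)
        - min (q k) (q' l + h l) + min (q k) (q' l)" for k l
    have cov: "integrable M (\<lambda>\<omega>. Y k \<omega> * Y' l \<omega>) \<and>
       (\<integral>\<omega>. Y k \<omega> * Y' l \<omega> \<partial>M) = ov k l - d' l * h k - d k * h l + d k * d' l" for k l
    proof -
      have "0 \<le> q k + h k" "q k \<le> 1" "0 \<le> q' l + h l" "q' l \<le> 1"
        using qb[of k] qb[of l] h0[of k] h0[of l] by linarith+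
      thus ?thesis
        using bridge_cov[OF BM, of "q k + h k" "q k" "q' l + h l" "q' l" \<kappa>] qb[of k] qb[of l]
        unfolding Y_def Y'_def ov_def d_def d'_def by simp
    qed
    have "(\<integral>\<omega>. (procX \<alpha> b \<kappa> W ((real j + 1) / real b ^ n) \<omega> - procX \<alpha> b \<kappa> W (real j / real b ^ n) \<omega>)
          * (procX \<alpha> b \<kappa> W ((real j + 1) / real b ^ n - 1 / real b) \<omega>
             - procX \<alpha> b \<kappa> W (real j / real b ^ n - 1 / real b) \<omega>) \<partial>M)
      = (\<integral>\<omega>. (\<Sum>k<n. \<alpha>^k * Y k \<omega>) * (\<Sum>l<n. \<alpha>^l * Y' l \<omega>) \<partial>M)"
      by (rule Bochner_Integration.integral_cong[OF refl]) (simp add: X1 X2)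
    also have "\<dots> = (\<integral>\<omega>. (\<Sum>k<n. \<Sum>l<n. \<alpha>^k * \<alpha>^l * (Y k \<omega> * Y' l \<omega>)) \<partial>M)"
      unfolding sum_product by (intro Bochner_Integration.integral_cong refl sum.cong) (simp add: mult_ac)
    also have "\<dots> = (\<Sum>k<n. \<Sum>l<n. \<alpha>^k * \<alpha>^l * (\<integral>\<omega>. Y k \<omega> * Y' l \<omega> \<partial>M))"
      using cov by (simp add: integral_sum Bochner_Integration.integrable_sum)
    also have "\<dots> = (\<Sum>k<n. \<Sum>l<n. \<alpha>^k * \<alpha>^l * (ov k l - d' l * h k - d k * h l + d k * d' l))"
      using cov by simp
    finally have Ieq: "(\<integral>\<omega>. (procX \<alpha> b \<kappa> W ((real j + 1) / real b ^ n) \<omega> - procX \<alpha> b \<kappa> W (real j / real b ^ n) \<omega>)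
          * (procX \<alpha> b \<kappa> W ((real j + 1) / real b ^ n - 1 / real b) \<omega>
             - procX \<alpha> b \<kappa> W (real j / real b ^ n - 1 / real b) \<omega>) \<partial>M)
      = (\<Sum>k<n. \<Sum>l<n. \<alpha>^k * \<alpha>^l * (ov k l - d' l * h k - d k * h l + d k * d' l))" .
    define E where "E k = C' * h k powr \<tau>" for k
    have dE: "\<bar>d k\<bar> \<le> E k" for k
      using hC[of "q k + h k" "q k"] qb[of k] h0[of k] unfolding d_def E_def by simp
    have d'E: "\<bar>d' k\<bar> \<le> E k" for k
      using hC[of "q' k + h k" "q' k"] qb[of k] h0[of k] unfolding d'_def E_def by simp
    have ov0: "0 \<le> ov k l" for k l
      unfolding ov_def by (rule ov_nonneg) (use h0 in auto)
    have q'1: "q' 1 = q 1"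
    proof -
      have "j = j' + b ^ (n - 1)" using j unfolding j'_def by simp
      hence "j mod b ^ (n - 1) = j' mod b ^ (n - 1)" by simp
      thus ?thesis unfolding q_def q'_def qq_def by simp
    qed
    have ov11: "ov 1 1 = h 1" unfolding ov_def q'1 using h0[of 1] by (simp add: min_def)
    have MB: "(\<Sum>k<n. \<Sum>l<n. \<alpha>^k * \<alpha>^l * (ov k l - d' l * h k - d k * h l + d k * d' l))
       \<ge> \<alpha>^2 * h 1 - 2 * (\<Sum>k<n. \<alpha>^k * E k) * (\<Sum>k<n. \<alpha>^k * h k) - (\<Sum>k<n. \<alpha>^k * E k)^2"
      by (rule main_bound[of n \<alpha> ov h d E d']) (use n2 alpha(1) ov0 ov11 h0 dE d'E in auto)
    have hk: "h k = (1 / real b) ^ (n - k)" for k by (simp add: h_def power_one_over)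
    have hkp: "h k powr \<tau> = (1 / \<beta>) ^ (n - k)" for k
      unfolding h_def \<beta>_def using powr_aux[OF rb1, of "n - k" \<tau>] by simp
    have SE: "(\<Sum>k<n. \<alpha>^k * E k) \<le> real n * (C' * \<rho>^n)"
    proof -
      have "(\<Sum>k<n. \<alpha>^k * E k) \<le> (\<Sum>k<n. C' * \<rho>^n)"
      proof (rule sum_mono)
        fix k assume "k \<in> {..<n}"
        hence "\<alpha>^k * (1 / \<beta>) ^ (n - k) \<le> \<rho>^n"
          using pf alpha by (intro term_bound) auto
        thus "\<alpha>^k * E k \<le> C' * \<rho>^n" unfolding E_def hkp using C'0
          by (metis mult.left_commute mult_left_mono)
      qed
      thus ?thesis by simp
    qed
    have SH: "(\<Sum>k<n. \<alpha>^k * h k) \<le> real n * \<rho>^n"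
    proof -
      have "(\<Sum>k<n. \<alpha>^k * h k) \<le> (\<Sum>k<n. \<rho>^n)"
      proof (rule sum_mono)
        fix k assume "k \<in> {..<n}"
        thus "\<alpha>^k * h k \<le> \<rho>^n" unfolding hk
          using pf alpha rb1 by (intro term_bound) auto
      qed
      thus ?thesis by simp
    qed
    have SE0: "0 \<le> (\<Sum>k<n. \<alpha>^k * E k)" unfolding E_def using alpha C'0 by (auto intro!: sum_nonneg)
    have SH0: "0 \<le> (\<Sum>k<n. \<alpha>^k * h k)" using alpha h0 by (auto intro!: sum_nonneg)
    have rho0: "0 \<le> \<rho>" using pf by simp
    have "2 * (\<Sum>k<n. \<alpha>^k * E k) * (\<Sum>k<n. \<alpha>^k * h k) \<le> 2 * (real n * (C' * \<rho>^n)) * (real n * \<rho>^n)"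
      using SE SH SE0 SH0 by (intro mult_mono) auto
    moreover have "(\<Sum>k<n. \<alpha>^k * E k)^2 \<le> (real n * (C' * \<rho>^n))^2"
      using SE SE0 by (intro power_mono) auto
    moreover have "2 * (real n * (C' * \<rho>^n)) * (real n * \<rho>^n) + (real n * (C' * \<rho>^n))^2
       = K * (real n ^ 2 * \<gamma> ^ n) / real b ^ n"
      using bpos by (simp add: K_def \<gamma>_def power_mult_distrib power2_eq_square field_simps power_mult[symmetric])
    moreover have "K * (real n ^ 2 * \<gamma> ^ n) / real b ^ n \<le> lam / real b ^ n"
      using N0 nN0 bpos by (simp add: divide_right_mono)
    moreover have "\<alpha>^2 * h 1 = 2 * (lam / real b ^ n)"
      unfolding h_def lam_def using bpos by (subst bn) (simp add: field_simps)
    ultimately show "(\<integral>\<omega>. (procX \<alpha> b \<kappa> W ((real j + 1) / real b ^ n) \<omega> - procX \<alpha> b \<kappa> W (real j / real b ^ n) \<omega>)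
          * (procX \<alpha> b \<kappa> W ((real j + 1) / real b ^ n - 1 / real b) \<omega>
             - procX \<alpha> b \<kappa> W (real j / real b ^ n - 1 / real b) \<omega>) \<partial>M)
     \<ge> lam / real b ^ n"
      unfolding Ieq using MB by linarith
  qed
qed

end
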